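(* Let $m\ge 1$, let $t_1<\cdots<t_m$ be real, and let $\omega_0,\dots,\omega_m$ be real numbers with $\sum_{k=0}^{\ell}\omega_k\ge 0$ for $\ell=0,1,\dots,m$ and such that the weight $$w(x)={\rm e}^{-x^2}\Big(\omega_0+\sum_{k=1}^m\omega_k\,\theta(x-t_k)\Big),\qquad x\in\mathbb{R},$$ is not identically zero. Let $P_n$, $h_n$, $\alpha_n$, $\beta_n$, $R_{n,k}$, $r_{n,k}$ be as in the context. Then for every $n\ge 0$, $$\alpha_n=\frac12\sum_{k=1}^m R_{n,k},\qquad \beta_n=\frac12\Big(\sum_{k=1}^m r_{n,k}+n\Big).$$
   Context: $\theta(y)=1$ for $y>0$ and $\theta(y)=0$ otherwise. $P_n(z)$ ($n\ge0$) denotes the monic polynomial of degree $n$ orthogonal with respect to $w$ on $\mathbb{R}$: $\int_{\mathbb{R}}P_j(x)P_k(x)w(x)\,dx=h_k\delta_{jk}$ with $h_k>0$; $P_{-1}:=0$. They satisfy the three-term recurrence $zP_n(z)=P_{n+1}(z)+\alpha_nP_n(z)+\beta_nP_{n-1}(z)$ for $n\ge0$, with $\beta_0:=0$ and $\beta_n=h_n/h_{n-1}$ for $n\ge1$. For $k=1,\dots,m$: $R_{n,k}:=\omega_k{\rm e}^{-t_k^2}P_n(t_k)^2/h_n$ for $n\ge0$, and $r_{n,k}:=\omega_k{\rm e}^{-t_k^2}P_n(t_k)P_{n-1}(t_k)/h_{n-1}$ for $n\ge1$, with $r_{0,k}:=0$. *)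

theory Defs
  imports "HOL-Analysis.Analysis" "HOL-Computational_Algebra.Polynomial"
begin

definition theta :: "real \<Rightarrow> real" where
  "theta y = (if y > 0 then 1 else 0)"

definition wt :: "nat \<Rightarrow> (nat \<Rightarrow> real) \<Rightarrow> (nat \<Rightarrow> real) \<Rightarrow> real \<Rightarrow> real" where
  "wt m \<omega> t x = exp (-(x^2)) * (\<omega> 0 + (\<Sum>k=1..m. \<omega> k * theta (x - t k)))"

definition OP :: "(real \<Rightarrow> real) \<Rightarrow> nat \<Rightarrow> real poly" where
  "OP w n = (THE p. degree p = n \<and> lead_coeff p = 1 \<and>
      (\<forall>q. degree q < n \<longrightarrow> (LINT x|lborel. poly p x * poly q x * w x) = 0))"

definition OPm1 :: "(real \<Rightarrow> real) \<Rightarrow> nat \<Rightarrow> real poly" where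
  "OPm1 w n = (if n = 0 then 0 else OP w (n - 1))"

definition hn :: "(real \<Rightarrow> real) \<Rightarrow> nat \<Rightarrow> real" where
  "hn w n = (LINT x|lborel. (poly (OP w n) x)^2 * w x)"

definition beta :: "(real \<Rightarrow> real) \<Rightarrow> nat \<Rightarrow> real" where
  "beta w n = (if n = 0 then 0 else hn w n / hn w (n - 1))"

definition alpha :: "(real \<Rightarrow> real) \<Rightarrow> nat \<Rightarrow> real" where
  "alpha w n = (THE a. \<forall>z. z * poly (OP w n) z
      = poly (OP w (Suc n)) z + a * poly (OP w n) z + beta w n * poly (OPm1 w n) z)"

definition Rnk :: "nat \<Rightarrow> (nat \<Rightarrow> real) \<Rightarrow> (nat \<Rightarrow> real) \<Rightarrow> nat \<Rightarrow> nat \<Rightarrow> real" where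
  "Rnk m \<omega> t n k = \<omega> k * exp (-((t k)^2)) * (poly (OP (wt m \<omega> t) n) (t k))^2 / hn (wt m \<omega> t) n"

definition rnk :: "nat \<Rightarrow> (nat \<Rightarrow> real) \<Rightarrow> (nat \<Rightarrow> real) \<Rightarrow> nat \<Rightarrow> nat \<Rightarrow> real" where
  "rnk m \<omega> t n k = (if n = 0 then 0 else
     \<omega> k * exp (-((t k)^2)) * poly (OP (wt m \<omega> t) n) (t k) * poly (OP (wt m \<omega> t) (n - 1)) (t k)
       / hn (wt m \<omega> t) (n - 1))"

end

theory Submission imports Defs "HOL-Probability.Distributions" begin


lemma gauss_mono_integrable: "integrable lborel (\<lambda>x::real. exp (-(x^2)) * x^k)"
proof (cases "even k")
  case True
  then obtain j where k: "k = 2*j" by (auto elim: evenE)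
  have "has_bochner_integral lborel (\<lambda>x::real. exp (-(x^2)) * x^(2*j))
     (2 *\<^sub>R ((sqrt pi / 2) * (fact (2 * j) / (2 ^ (2 * j) * fact j))))"
    by (rule has_bochner_integral_even_function[OF gaussian_moment_even_pos[of j]]) simp
  then show ?thesis unfolding k by (simp add: has_bochner_integral_iff)
next
  case False
  then obtain j where k: "k = 2*j+1" using oddE by blast
  have "has_bochner_integral lborel (\<lambda>x::real. exp (-(x^2)) * x^(2*j+1)) 0"
    by (rule has_bochner_integral_odd_function[OF gaussian_moment_odd_pos[of j]]) simp
  then show ?thesis unfolding k by (simp add: has_bochner_integral_iff)
qed

definition G :: "real poly \<Rightarrow> real \<Rightarrow> real" where
  "G p x = poly p x * exp (-(x^2))"

lemma G_integrable: "integrable lborel (G p)"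
proof -
  have G: "G p = (\<lambda>x. \<Sum>i\<le>degree p. coeff p i * (x^i * exp (-(x^2))))"
    by (rule ext) (simp add: G_def poly_altdef sum_distrib_right mult.assoc)
  have "integrable lborel (\<lambda>x::real. x^i * exp (-(x^2)))" for i
  proof -
    have e: "(\<lambda>x::real. x^i * exp (-(x^2))) = (\<lambda>x. exp (-(x^2)) * x^i)" by (simp add: fun_eq_iff mult.commute)
    show ?thesis by (subst e) (rule gauss_mono_integrable)
  qed
  then show ?thesis unfolding G
    by (auto intro!: integrable_sum integrable_mult_right)
qed

lemma mono_lim_top: "((\<lambda>x::real. coeff p i * (x^i * exp (-(x^2)))) \<longlongrightarrow> 0) at_top"
proof -
  have "((\<lambda>x::real. x^i * exp (-(x^2))) \<longlongrightarrow> 0) at_top"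
  proof (rule Lim_null_comparison[OF _ tendsto_power_div_exp_0[of i]])
    show "\<forall>\<^sub>F x in at_top. norm (x ^ i * exp (- x\<^sup>2)) \<le> x ^ i / exp x"
      using eventually_ge_at_top[of "1::real"]
    proof eventually_elim
      case (elim x)
      have "exp (-(x^2)) \<le> exp (-x)" using elim by (simp add: power2_eq_square)
      then have "x^i * exp (-(x^2)) \<le> x^i * exp (-x)" using elim by (intro mult_left_mono) auto
      then show ?case using elim by (simp add: exp_minus field_simps)
    qed
  qed
  then show ?thesis by (rule tendsto_mult_right_zero)
qed

lemma G_lim_top: "(G p \<longlongrightarrow> 0) at_top"
proof -
  have "G p = (\<lambda>x. \<Sum>i\<le>degree p. coeff p i * (x^i * exp (-(x^2))))"
    by (rule ext) (simp add: G_def poly_altdef sum_distrib_right mult.assoc)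
  then show ?thesis using mono_lim_top by (auto intro!: tendsto_null_sum)
qed

lemma G_lim_bot: "(G p \<longlongrightarrow> 0) at_bot"
proof -
  have "G p (-x) = G (p \<circ>\<^sub>p [:0,-1:]) x" for x
    by (simp add: G_def poly_pcompose)
  then show ?thesis
    unfolding filterlim_at_bot_mirror using G_lim_top[of "p \<circ>\<^sub>p [:0,-1:]"] by simp
qed

lemma G_deriv: "(G p has_real_derivative G (pderiv p - smult 2 (pCons 0 p)) x) (at x)"
  unfolding G_def
  by (auto intro!: derivative_eq_intros simp: algebra_simps poly_pCons)

lemma G_ftc_UNIV: "(LINT x|lborel. G (pderiv p - smult 2 (pCons 0 p)) x) = 0"
proof -
  have "(LBINT x=-\<infinity>..\<infinity>. G (pderiv p - smult 2 (pCons 0 p)) x) = 0 - 0"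
    apply (rule interval_integral_FTC_integrable)
    using G_deriv G_integrable G_lim_top G_lim_bot DERIV_isCont[OF G_deriv]
      DERIV_isCont[OF G_deriv[of p c], unfolded isCont_def filterlim_at_split]
    by (auto simp: has_real_derivative_iff_has_vector_derivative[symmetric] ereal_tendsto_simps1
        set_integrable_def DERIV_isCont)
  then show ?thesis by (simp add: interval_lebesgue_integral_def set_lebesgue_integral_def)
qed

lemma G_ftc_Ioi: "(LINT x|lborel. indicator {c<..} x *\<^sub>R G (pderiv p - smult 2 (pCons 0 p)) x) = - G p c"
proof -
  have ii: "integrable lborel (\<lambda>x. indicator {c<..} x *\<^sub>R G q x)" for q
    by (rule integrable_mult_indicator) (auto simp: G_integrable)
  have "(LBINT x=ereal c..\<infinity>. G (pderiv p - smult 2 (pCons 0 p)) x) = 0 - G p c"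
    apply (rule interval_integral_FTC_integrable)
    using G_deriv G_integrable G_lim_top G_lim_bot DERIV_isCont[OF G_deriv] ii
      DERIV_isCont[OF G_deriv[of p c], unfolded isCont_def filterlim_at_split]
    by (auto simp: has_real_derivative_iff_has_vector_derivative[symmetric] ereal_tendsto_simps1
        set_integrable_def DERIV_isCont 
        intro!: continuous_imp_tendsto)
  then show ?thesis by (simp add: interval_lebesgue_integral_def set_lebesgue_integral_def)
qed



definition Iw :: "(real \<Rightarrow> real) \<Rightarrow> real poly \<Rightarrow> real" where
  "Iw w q = (LINT x|lborel. poly q x * w x)"

definition orth :: "(real \<Rightarrow> real) \<Rightarrow> nat \<Rightarrow> real poly \<Rightarrow> bool" where
  "orth w n p \<longleftrightarrow> degree p = n \<and> lead_coeff p = 1 \<and> (\<forall>q. degree q < n \<longrightarrow> Iw w (p*q) = 0)"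

lemma OP_alt: "OP w n = (THE p. orth w n p)"
  by (simp add: OP_def orth_def Iw_def mult.assoc)

lemma hn_alt: "hn w n = Iw w (OP w n * OP w n)"
  by (simp add: hn_def Iw_def power2_eq_square)

lemma coeff_ge_0: "degree p < n \<Longrightarrow> n \<le> i \<Longrightarrow> coeff p i = 0"
  by (simp add: coeff_eq_0)

locale opw =
  fixes w :: "real \<Rightarrow> real"
  assumes integ: "\<And>q. integrable lborel (\<lambda>x. poly q x * w x)"
    and pos: "\<And>p. p \<noteq> 0 \<Longrightarrow> Iw w (p*p) > 0"
begin

lemma Iw_add: "Iw w (p + q) = Iw w p + Iw w q"
  unfolding Iw_def using integ[of p] integ[of q]
  by (simp add: distrib_right)

lemma Iw_smult: "Iw w (smult c p) = c * Iw w p"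
  unfolding Iw_def by (simp add: mult.assoc)

lemma Iw_0: "Iw w 0 = 0"
  unfolding Iw_def by simp

lemma Iw_minus: "Iw w (- p) = - Iw w p"
  unfolding Iw_def by simp

lemma Iw_diff: "Iw w (p - q) = Iw w p - Iw w q"
  using Iw_add[of p "-q"] Iw_minus[of q] by simp

lemma Iw_sum: "Iw w (\<Sum>i\<in>A. f i) = (\<Sum>i\<in>A. Iw w (f i))"
proof (induction A rule: infinite_finite_induct)
  case (infinite A) then show ?case by (simp add: Iw_0)
next
  case empty then show ?case by (simp add: Iw_0)
next
  case (insert x F) then show ?case by (simp add: Iw_add)
qed

lemma orth_vanish:
  assumes "orth w n p" "\<forall>i\<ge>n. coeff q i = 0"
  shows "Iw w (p * q) = 0"
proof (cases "q = 0")
  case True then show ?thesis by (simp add: Iw_0)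
next
  case False
  then have "coeff q (degree q) \<noteq> 0" by simp
  then have "degree q < n" using assms(2) by (meson not_le)
  then show ?thesis using assms(1) unfolding orth_def by blast
qed

lemma orth_nz: "orth w n p \<Longrightarrow> p \<noteq> 0"
  unfolding orth_def by auto

lemma orth_coeff: "orth w n p \<Longrightarrow> n \<le> i \<Longrightarrow> coeff p i = (if i = n then 1 else 0)"
  unfolding orth_def by (auto simp: coeff_eq_0)

lemma orth_unique:
  assumes "orth w n p" "orth w n p'"
  shows "p = p'"
proof (rule ccontr)
  assume ne: "p \<noteq> p'"
  have c: "\<forall>i\<ge>n. coeff (p - p') i = 0"
    using orth_coeff[OF assms(1)] orth_coeff[OF assms(2)] by simp
  have "Iw w ((p - p') * (p - p')) = Iw w (p * (p - p')) - Iw w (p' * (p - p'))"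
    by (simp add: left_diff_distrib Iw_diff)
  also have "\<dots> = 0" using orth_vanish[OF assms(1) c] orth_vanish[OF assms(2) c] by simp
  finally show False using pos[of "p - p'"] ne by simp
qed

lemma orth_pair:
  assumes "orth w i p" "orth w j q" "i \<noteq> j"
  shows "Iw w (p * q) = 0"
proof (cases "j < i")
  case True
  then show ?thesis using assms unfolding orth_def by auto
next
  case False
  then have "i < j" using assms(3) by simp
  then have "Iw w (q * p) = 0" using assms unfolding orth_def by auto
  then show ?thesis by (simp add: mult.commute)
qed

lemma span:
  assumes "\<forall>j<n. orth w j (P j)" "\<forall>i\<ge>n. coeff q i = 0"
  shows "\<exists>d. q = (\<Sum>j<n. smult (d j) (P j))"
  using assms
proof (induction n arbitrary: q)
  case 0
  then have "q = 0" by (simp add: poly_eq_iff)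
  then show ?case by simp
next
  case (Suc n)
  define q' where "q' = q - smult (coeff q n) (P n)"
  have o: "orth w n (P n)" using Suc.prems by simp
  have "\<forall>i\<ge>n. coeff q' i = 0"
    using Suc.prems(2) orth_coeff[OF o] unfolding q'_def
    by (auto simp: Suc_le_eq)
  then obtain d where d: "q' = (\<Sum>j<n. smult (d j) (P j))" using Suc by auto
  define d' where "d' = d(n := coeff q n)"
  have "(\<Sum>j<Suc n. smult (d' j) (P j)) = (\<Sum>j<n. smult (d j) (P j)) + smult (coeff q n) (P n)"
    by (simp add: d'_def)
  also have "\<dots> = q" using d unfolding q'_def by simp
  finally show ?case by metis
qed

lemma orth_exists: "\<exists>p. orth w n p"
proof (induction n rule: less_induct)
  case (less n)
  have O: "orth w j (OP w j)" if jn: "j < n" for j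
  proof -
    obtain p where p: "orth w j p" using less[OF jn] by blast
    have "(THE p. orth w j p) = p" by (rule the_equality[where P="orth w j"]) (use p orth_unique in blast)+
    then show ?thesis unfolding OP_alt using p by simp
  qed
  define c where "c j = Iw w (monom 1 n * OP w j) / Iw w (OP w j * OP w j)" for j
  define S where "S = (\<Sum>j<n. smult (c j) (OP w j))"
  define P where "P = monom 1 n - S"
  have cz: "coeff S i = 0" if ni: "i \<ge> n" for i
  proof -
    have "coeff (OP w j) i = 0" if "j < n" for j
      using orth_coeff[OF O[OF that], of i] ni that by auto
    then show ?thesis unfolding S_def coeff_sum by (auto intro!: sum.neutral)
  qed
  have cP: "coeff P i = (if i = n then 1 else 0)" if "i \<ge> n" for i
    using cz[OF that] by (simp add: P_def coeff_monom)
  have dP: "degree P = n"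
    using cP by (intro antisym degree_le le_degree) auto
  have lP: "lead_coeff P = 1" using cP dP by simp
  have PO: "Iw w (P * OP w i) = 0" if ilt: "i < n" for i
  proof -
    have z: "Iw w (OP w j * OP w i) = 0" if "j < n" "j \<noteq> i" for j
      using orth_pair[OF O[OF that(1)] O[OF ilt] that(2)] .
    have "Iw w (S * OP w i) = (\<Sum>j<n. c j * Iw w (OP w j * OP w i))"
      unfolding S_def sum_distrib_right by (simp add: Iw_sum Iw_smult)
    also have "\<dots> = (\<Sum>j<n. if j = i then c i * Iw w (OP w i * OP w i) else 0)"
      using z by (intro sum.cong) auto
    also have "\<dots> = c i * Iw w (OP w i * OP w i)" using ilt by simp
    also have "\<dots> = Iw w (monom 1 n * OP w i)"
      unfolding c_def using pos[OF orth_nz[OF O[OF ilt]]] by simp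
    finally show ?thesis unfolding P_def by (simp add: left_diff_distrib Iw_diff)
  qed
  have "Iw w (P * q) = 0" if "degree q < n" for q
  proof -
    have cq: "\<forall>i\<ge>n. coeff q i = 0" using that by (auto simp: coeff_eq_0)
    have "\<forall>j<n. orth w j (OP w j)" using O by blast
    from span[OF this cq] obtain d where d: "q = (\<Sum>j<n. smult (d j) (OP w j))" by blast
    show ?thesis unfolding d sum_distrib_left
      by (simp add: Iw_sum Iw_smult PO)
  qed
  then have "orth w n P" unfolding orth_def using dP lP by simp
  then show ?case by blast
qed

lemma OP_orth: "orth w n (OP w n)"
proof -
  obtain p where p: "orth w n p" using orth_exists by blast
  have "(THE p. orth w n p) = p" by (rule the_equality[where P="orth w n"]) (use p orth_unique in blast)+
  then show ?thesis unfolding OP_alt using p by simp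
qed

end


context opw begin

lemma OP_nz: "OP w n \<noteq> 0" using orth_nz[OF OP_orth] .

lemma h_pos: "hn w n > 0" unfolding hn_alt using pos[OF OP_nz] .

lemma OP_vanish: "\<forall>i\<ge>n. coeff q i = 0 \<Longrightarrow> Iw w (OP w n * q) = 0"
  using orth_vanish[OF OP_orth] .

lemma OP_pair: "i \<noteq> j \<Longrightarrow> Iw w (OP w i * OP w j) = 0"
  using orth_pair[OF OP_orth OP_orth] .

lemma OP_coeff: "n \<le> i \<Longrightarrow> coeff (OP w n) i = (if i = n then 1 else 0)"
  using orth_coeff[OF OP_orth] .

lemma OP_degree: "degree (OP w n) = n"
  using OP_orth unfolding orth_def by simp

lemma x_OP_prev: "Iw w (OP w (Suc n) * pCons 0 (OP w n)) = hn w (Suc n)"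
proof -
  have c: "\<forall>i\<ge>Suc n. coeff (pCons 0 (OP w n) - OP w (Suc n)) i = 0"
  proof (intro allI impI)
    fix i assume "Suc n \<le> i"
    then obtain i' where "i = Suc i'" "n \<le> i'" by (cases i) auto
    then show "coeff (pCons 0 (OP w n) - OP w (Suc n)) i = 0"
      using OP_coeff[of n i'] OP_coeff[of "Suc n" i] by simp
  qed
  have "pCons 0 (OP w n) = OP w (Suc n) + (pCons 0 (OP w n) - OP w (Suc n))" by simp
  then have "Iw w (OP w (Suc n) * pCons 0 (OP w n)) = Iw w (OP w (Suc n) * OP w (Suc n))
     + Iw w (OP w (Suc n) * (pCons 0 (OP w n) - OP w (Suc n)))"
    by (metis Iw_add distrib_left)
  then show ?thesis using OP_vanish[OF c] hn_alt by simp
qed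

lemma recurrence:
  fixes n :: nat
  defines "a \<equiv> Iw w (pCons 0 (OP w n) * OP w n) / hn w n"
  shows "pCons 0 (OP w n) = OP w (Suc n) + smult a (OP w n) + smult (beta w n) (OPm1 w n)"
proof -
  define r where "r = pCons 0 (OP w n) - OP w (Suc n) - smult a (OP w n) - smult (beta w n) (OPm1 w n)"
  have cO1: "coeff (OPm1 w n) i = 0" if "i \<ge> n" for i
    using OP_coeff[of "n - 1" i] that by (cases n) (auto simp: OPm1_def)
  have c: "\<forall>i\<ge>Suc n. coeff r i = 0"
  proof (intro allI impI)
    fix i assume "Suc n \<le> i"
    then obtain i' where "i = Suc i'" "n \<le> i'" by (cases i) auto
    then show "coeff r i = 0" unfolding r_def
      using OP_coeff[of n i'] OP_coeff[of "Suc n" i] OP_coeff[of n i] cO1[of i] by simp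
  qed
  obtain d where d: "r = (\<Sum>j<Suc n. smult (d j) (OP w j))"
    using span[of "Suc n" "OP w" r] c OP_orth by blast
  have rO: "Iw w (r * OP w i) = 0" if "i < Suc n" for i
  proof -
    have e: "Iw w (r * OP w i) = Iw w (OP w n * pCons 0 (OP w i)) - Iw w (OP w (Suc n) * OP w i)
       - a * Iw w (OP w n * OP w i) - beta w n * Iw w (OPm1 w n * OP w i)"
    proof -
      have "r * OP w i = pCons 0 (OP w n) * OP w i - OP w (Suc n) * OP w i - smult a (OP w n * OP w i)
         - smult (beta w n) (OPm1 w n * OP w i)"
        by (simp add: r_def algebra_simps)
      moreover have "pCons 0 (OP w n) * OP w i = OP w n * pCons 0 (OP w i)" by simp
      ultimately show ?thesis by (simp only: Iw_diff Iw_smult)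
    qed
    have z1: "Iw w (OP w (Suc n) * OP w i) = 0" using that OP_pair by simp
    show ?thesis
    proof (cases "i = n")
      case True
      have "Iw w (OPm1 w n * OP w i) = 0" using True OP_pair by (simp add: OPm1_def Iw_0)
      moreover have "a * Iw w (OP w n * OP w i) = Iw w (OP w n * pCons 0 (OP w i))"
        using True h_pos[of n] unfolding a_def hn_alt by (simp add: mult.commute)
      ultimately show ?thesis using e z1 by simp
    next
      case False
      then have ilt: "i < n" using that by simp
      have z2: "Iw w (OP w n * OP w i) = 0" using OP_pair ilt by simp
      show ?thesis
      proof (cases "Suc i = n")
        case True
        have "Iw w (OP w n * pCons 0 (OP w i)) = hn w n"
          using x_OP_prev[of i] True by simp
        moreover have "beta w n * Iw w (OPm1 w n * OP w i) = hn w n"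
          using True h_pos[of i] unfolding beta_def OPm1_def hn_alt by auto
        ultimately show ?thesis using e z1 z2 by simp
      next
        case False
        then have "Suc i < n" using ilt by simp
        then have "\<forall>k\<ge>n. coeff (pCons 0 (OP w i)) k = 0"
          using OP_degree[of i] by (auto simp: coeff_eq_0)
        then have z3: "Iw w (OP w n * pCons 0 (OP w i)) = 0" by (rule OP_vanish)
        have "Iw w (OPm1 w n * OP w i) = 0"
          using \<open>Suc i < n\<close> OP_pair[of "n - 1" i] by (simp add: OPm1_def)
        then show ?thesis using e z1 z2 z3 by simp
      qed
    qed
  qed
  have "Iw w (r * r) = Iw w (r * (\<Sum>j<Suc n. smult (d j) (OP w j)))"
    by (subst (2) d) (rule refl)
  also have "\<dots> = (\<Sum>j<Suc n. d j * Iw w (r * OP w j))"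
    by (simp only: sum_distrib_left mult_smult_right Iw_sum Iw_smult)
  also have "\<dots> = 0" using rO by simp
  finally have "Iw w (r * r) = 0" .
  then have "r = 0" using pos[of r] by force
  then show ?thesis unfolding r_def by (simp add: algebra_simps)
qed

lemma alpha_eq: "alpha w n = Iw w (pCons 0 (OP w n) * OP w n) / hn w n"
proof -
  define a where "a = Iw w (pCons 0 (OP w n) * OP w n) / hn w n"
  have R: "\<forall>z. z * poly (OP w n) z = poly (OP w (Suc n)) z + a * poly (OP w n) z + beta w n * poly (OPm1 w n) z"
  proof
    fix z
    have "poly (pCons 0 (OP w n)) z = poly (OP w (Suc n) + smult a (OP w n) + smult (beta w n) (OPm1 w n)) z"
      using recurrence[of n] unfolding a_def by metis
    then show "z * poly (OP w n) z = poly (OP w (Suc n)) z + a * poly (OP w n) z + beta w n * poly (OPm1 w n) z"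
      by simp
  qed
  obtain z0 where z0: "poly (OP w n) z0 \<noteq> 0" using OP_nz poly_all_0_iff_0 by blast
  have "alpha w n = a" unfolding alpha_def
  proof (rule the_equality)
    fix b assume "\<forall>z. z * poly (OP w n) z = poly (OP w (Suc n)) z + b * poly (OP w n) z + beta w n * poly (OPm1 w n) z"
    then have "b * poly (OP w n) z0 = a * poly (OP w n) z0" using R by (metis add_right_cancel add_left_cancel)
    then show "b = a" using z0 by simp
  qed (rule R)
  then show ?thesis unfolding a_def .
qed

end


lemma theta_ind: "theta (x - c) = indicator {c<..} x"
  by (simp add: theta_def indicator_def)

definition Wf :: "nat \<Rightarrow> (nat \<Rightarrow> real) \<Rightarrow> (nat \<Rightarrow> real) \<Rightarrow> real \<Rightarrow> real" where
  "Wf m \<omega> t x = \<omega> 0 + (\<Sum>k=1..m. \<omega> k * theta (x - t k))"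

lemma wt_Wf: "wt m \<omega> t x = exp (-(x^2)) * Wf m \<omega> t x"
  by (simp add: wt_def Wf_def)

lemma wt_decomp: "poly q x * wt m \<omega> t x
   = \<omega> 0 * G q x + (\<Sum>k=1..m. \<omega> k * (indicator {t k<..} x *\<^sub>R G q x))"
proof -
  have "poly q x * wt m \<omega> t x = \<omega> 0 * G q x + (\<Sum>k=1..m. \<omega> k * theta (x - t k) * G q x)"
    by (simp add: wt_def G_def sum_distrib_left sum_distrib_right algebra_simps)
  also have "\<dots> = \<omega> 0 * G q x + (\<Sum>k=1..m. \<omega> k * (indicator {t k<..} x *\<^sub>R G q x))"
    by (intro arg_cong2[where f="(+)"] refl sum.cong) (simp_all add: theta_ind)
  finally show ?thesis .
qed

lemma ind_integrable: "integrable lborel (\<lambda>x. indicator {c<..} x *\<^sub>R G q x)"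
  by (rule integrable_mult_indicator) (auto simp: G_integrable)

lemma wt_integrable: "integrable lborel (\<lambda>x. poly q x * wt m \<omega> t x)"
  unfolding wt_decomp using G_integrable ind_integrable
  by (auto intro!: integrable_add integrable_mult_right integrable_sum)

lemma Iw_wt: "Iw (wt m \<omega> t) q = \<omega> 0 * (LINT x|lborel. G q x)
   + (\<Sum>k=1..m. \<omega> k * (LINT x|lborel. indicator {t k<..} x *\<^sub>R G q x))"
proof -
  have "Iw (wt m \<omega> t) q = (LINT x|lborel. \<omega> 0 * G q x + (\<Sum>k=1..m. \<omega> k * (indicator {t k<..} x *\<^sub>R G q x)))"
    unfolding Iw_def wt_decomp ..
  also have "\<dots> = (LINT x|lborel. \<omega> 0 * G q x) + (LINT x|lborel. (\<Sum>k=1..m. \<omega> k * (indicator {t k<..} x *\<^sub>R G q x)))"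
  proof (rule Bochner_Integration.integral_add)
    show "integrable lborel (\<lambda>x. \<omega> 0 * G q x)" using G_integrable by auto
    show "integrable lborel (\<lambda>x. \<Sum>k=1..m. \<omega> k * (indicator {t k<..} x *\<^sub>R G q x))"
      using ind_integrable by (auto intro!: integrable_sum integrable_mult_right)
  qed
  also have "(LINT x|lborel. (\<Sum>k=1..m. \<omega> k * (indicator {t k<..} x *\<^sub>R G q x)))
     = (\<Sum>k=1..m. (LINT x|lborel. \<omega> k * (indicator {t k<..} x *\<^sub>R G q x)))"
    using ind_integrable by (intro Bochner_Integration.integral_sum) (auto intro!: integrable_mult_right)
  finally show ?thesis by simp
qed

lemma Wf_nonneg:
  assumes mono: "strict_mono_on {1..m} t" and ps: "\<forall>l\<le>m. (\<Sum>k=0..l. \<omega> k) \<ge> 0"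
  shows "Wf m \<omega> t x \<ge> 0"
proof -
  define S where "S = {k\<in>{1..m}. t k < x}"
  have fS: "finite S" unfolding S_def by simp
  have "(\<Sum>k=1..m. \<omega> k * theta (x - t k)) = (\<Sum>k\<in>{1..m}. if t k < x then \<omega> k else 0)"
    by (intro sum.cong) (auto simp: theta_def)
  also have "\<dots> = (\<Sum>k\<in>S. \<omega> k)"
    unfolding S_def by (rule sum.inter_filter[symmetric]) simp
  finally have W: "Wf m \<omega> t x = \<omega> 0 + (\<Sum>k\<in>S. \<omega> k)" by (simp add: Wf_def)
  show ?thesis
  proof (cases "S = {}")
    case True
    then show ?thesis using W ps by auto
  next
    case False
    define l where "l = Max S"
    have lS: "l \<in> S" unfolding l_def using Max_in[OF fS False] .
    have "S = {1..l}"
    proof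
      show "S \<subseteq> {1..l}" unfolding l_def using Max_ge[OF fS] by (auto simp: S_def)
      show "{1..l} \<subseteq> S"
      proof
        fix j assume j: "j \<in> {1..l}"
        have lm: "l \<in> {1..m}" "t l < x" using lS by (auto simp: S_def)
        have "t j \<le> t l"
        proof (cases "j = l")
          case False
          then have "j < l" using j by auto
          then show ?thesis using mono lm j unfolding strict_mono_on_def
            by (metis atLeastAtMost_iff less_imp_le order.trans)
        qed simp
        then show "j \<in> S" using lm j by (auto simp: S_def)
      qed
    qed
    then have "Wf m \<omega> t x = (\<Sum>k=0..l. \<omega> k)" using W by (simp add: sum.atLeast_Suc_atMost)
    moreover have "l \<le> m" using lS by (auto simp: S_def)
    ultimately show ?thesis using ps by auto
  qed
qed

lemma wt_pos_def:
  assumes mono: "strict_mono_on {1..m} t" and ps: "\<forall>l\<le>m. (\<Sum>k=0..l. \<omega> k) \<ge> 0"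
    and nz: "\<exists>x. wt m \<omega> t x \<noteq> 0" and p: "p \<noteq> 0"
  shows "Iw (wt m \<omega> t) (p * p) > 0"
proof -
  let ?W = "Wf m \<omega> t"
  obtain x0 where "wt m \<omega> t x0 \<noteq> 0" using nz by blast
  then have W0: "?W x0 > 0" using Wf_nonneg[OF mono ps, of x0] by (auto simp: wt_Wf)
  have ev: "\<forall>\<^sub>F x in at_left x0. \<forall>k\<in>{1..m}. theta (x - t k) = theta (x0 - t k)"
  proof (intro eventually_ball_finite ballI)
    fix k
    show "\<forall>\<^sub>F x in at_left x0. theta (x - t k) = theta (x0 - t k)"
    proof (cases "t k < x0")
      case True
      show ?thesis using eventually_at_left_real[OF True] by eventually_elim (use True in \<open>auto simp: theta_def\<close>)
    next
      case False
      have "x0 - 1 < x0" by simp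
      show ?thesis using eventually_at_left_real[OF \<open>x0 - 1 < x0\<close>]
        by eventually_elim (use False in \<open>auto simp: theta_def\<close>)
    qed
  qed simp
  then have "\<forall>\<^sub>F x in at_left x0. ?W x = ?W x0"
    by eventually_elim (simp add: Wf_def)
  then obtain b where b: "b < x0" "\<And>y. b < y \<Longrightarrow> y < x0 \<Longrightarrow> ?W y = ?W x0"
    unfolding eventually_at_left_field by blast
  let ?f = "\<lambda>x. poly (p * p) x * wt m \<omega> t x"
  have nn: "0 \<le> ?f x" for x
    using Wf_nonneg[OF mono ps, of x] by (simp add: wt_Wf)
  have "Iw (wt m \<omega> t) (p * p) \<ge> 0" unfolding Iw_def using nn by simp
  moreover have "Iw (wt m \<omega> t) (p * p) \<noteq> 0"
  proof
    assume "Iw (wt m \<omega> t) (p * p) = 0"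
    moreover have A: "integral\<^sup>L lborel ?f = 0 \<longleftrightarrow> (AE x in lborel. ?f x = 0)"
      by (rule integral_nonneg_eq_0_iff_AE[OF wt_integrable]) (rule AE_I2[OF nn])
    ultimately have "AE x in lborel. ?f x = 0" unfolding Iw_def by blast
    moreover have "AE x in lborel. x \<notin> {x. poly p x = 0}"
      by (rule AE_not_in[OF finite_imp_null_set_lborel[OF poly_roots_finite[OF p]]])
    ultimately have "AE x in lborel. x \<notin> {b<..<x0}"
    proof eventually_elim
      case (elim x)
      show ?case
      proof
        assume "x \<in> {b<..<x0}"
        then have "?W x = ?W x0" using b by auto
        have "poly p x * poly p x > 0" using elim(2) not_real_square_gt_zero by blast
        then have "?f x > 0" using W0 \<open>?W x = ?W x0\<close> by (simp add: wt_Wf)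
        then show False using elim(1) by (metis less_irrefl)
      qed
    qed
    then have "emeasure lborel {b<..<x0} = 0"
      by (subst (asm) AE_iff_measurable[where N="{b<..<x0}"]) auto
    then show False using b(1) by simp
  qed
  ultimately show ?thesis by simp
qed

lemma wt_opw:
  assumes "strict_mono_on {1..m} t" "\<forall>l\<le>m. (\<Sum>k=0..l. \<omega> k) \<ge> 0" "\<exists>x. wt m \<omega> t x \<noteq> 0"
  shows "opw (wt m \<omega> t)"
  using wt_integrable wt_pos_def[OF assms] by unfold_locales auto



lemma IBP:
  assumes "opw (wt m \<omega> t)"
  shows "Iw (wt m \<omega> t) (pderiv p) = 2 * Iw (wt m \<omega> t) (pCons 0 p)
     - (\<Sum>k=1..m. \<omega> k * exp (-((t k)^2)) * poly p (t k))"
proof -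
  interpret opw "wt m \<omega> t" by fact
  have "Iw (wt m \<omega> t) (pderiv p - smult 2 (pCons 0 p))
     = \<omega> 0 * 0 + (\<Sum>k=1..m. \<omega> k * (- G p (t k)))"
    unfolding Iw_wt G_ftc_UNIV G_ftc_Ioi ..
  moreover have "Iw (wt m \<omega> t) (pderiv p - smult 2 (pCons 0 p))
     = Iw (wt m \<omega> t) (pderiv p) - 2 * Iw (wt m \<omega> t) (pCons 0 p)"
    by (simp only: Iw_diff Iw_smult)
  ultimately show ?thesis by (simp add: G_def sum_negf algebra_simps)
qed

theorem lemma2p6:
  fixes m :: nat and t \<omega> :: "nat \<Rightarrow> real" and n :: nat
  assumes "m \<ge> 1"
    and "strict_mono_on {1..m} t"
    and "\<forall>l\<le>m. (\<Sum>k=0..l. \<omega> k) \<ge> 0"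
    and "\<exists>x. wt m \<omega> t x \<noteq> 0"
  shows "alpha (wt m \<omega> t) n = (1/2) * (\<Sum>k=1..m. Rnk m \<omega> t n k)
       \<and> beta (wt m \<omega> t) n = (1/2) * ((\<Sum>k=1..m. rnk m \<omega> t n k) + real n)"
proof -
  have O: "opw (wt m \<omega> t)" using wt_opw assms(2-4) by blast
  interpret opw "wt m \<omega> t" by (rule O)
  let ?w = "wt m \<omega> t"
  let ?E = "\<lambda>k. \<omega> k * exp (-((t k)^2))"
  have A: "alpha ?w n = (1/2) * (\<Sum>k=1..m. Rnk m \<omega> t n k)"
  proof -
    let ?P = "OP ?w n"
    have c: "\<forall>i\<ge>n. coeff (pderiv ?P) i = 0"
      using OP_coeff[of n] by (auto simp: coeff_pderiv)
    have z: "Iw ?w (?P * pderiv ?P) = 0" by (rule OP_vanish[OF c])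
    have e: "pderiv (?P * ?P) = ?P * pderiv ?P + ?P * pderiv ?P"
      by (simp add: pderiv_mult mult.commute)
    have "Iw ?w (pderiv (?P * ?P)) = Iw ?w (?P * pderiv ?P) + Iw ?w (?P * pderiv ?P)"
      by (simp only: e Iw_add)
    then have "0 = 2 * Iw ?w (pCons 0 (?P * ?P)) - (\<Sum>k=1..m. ?E k * poly (?P * ?P) (t k))"
      using IBP[OF O, of "?P * ?P"] z by simp
    then have I: "Iw ?w (pCons 0 ?P * ?P) = (1/2) * (\<Sum>k=1..m. ?E k * (poly ?P (t k))^2)"
      by (simp add: power2_eq_square)
    show ?thesis unfolding alpha_eq I Rnk_def
      by (simp add: sum_divide_distrib mult.commute)
  qed
  have B: "beta ?w n = (1/2) * ((\<Sum>k=1..m. rnk m \<omega> t n k) + real n)"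
  proof (cases n)
    case 0
    then show ?thesis by (simp add: beta_def rnk_def)
  next
    case (Suc n')
    let ?P = "OP ?w (Suc n')" and ?Q = "OP ?w n'"
    have c1: "\<forall>i\<ge>Suc n'. coeff (pderiv ?Q) i = 0"
      using OP_coeff[of n'] by (auto simp: coeff_pderiv)
    have z1: "Iw ?w (?P * pderiv ?Q) = 0" by (rule OP_vanish[OF c1])
    have c2: "\<forall>i\<ge>n'. coeff (pderiv ?P - smult (of_nat (Suc n')) ?Q) i = 0"
    proof (intro allI impI)
      fix i assume "n' \<le> i"
      then show "coeff (pderiv ?P - smult (of_nat (Suc n')) ?Q) i = 0"
        using OP_coeff[of n' i] OP_coeff[of "Suc n'" "Suc i"] by (auto simp: coeff_pderiv)
    qed
    have z2: "Iw ?w (?Q * (pderiv ?P - smult (of_nat (Suc n')) ?Q)) = 0" by (rule OP_vanish[OF c2])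
    have "Iw ?w (?Q * pderiv ?P) = Iw ?w (?Q * (smult (of_nat (Suc n')) ?Q + (pderiv ?P - smult (of_nat (Suc n')) ?Q)))"
      by simp
    also have "\<dots> = of_nat (Suc n') * hn ?w n'"
      unfolding distrib_left Iw_add z2 hn_alt by (simp add: Iw_smult)
    finally have d1: "Iw ?w (?Q * pderiv ?P) = of_nat (Suc n') * hn ?w n'" .
    have "Iw ?w (pderiv (?P * ?Q)) = Iw ?w (?P * pderiv ?Q) + Iw ?w (?Q * pderiv ?P)"
      by (simp only: pderiv_mult Iw_add)
    then have "of_nat (Suc n') * hn ?w n' = 2 * Iw ?w (pCons 0 (?P * ?Q)) - (\<Sum>k=1..m. ?E k * poly (?P * ?Q) (t k))"
      using IBP[OF O, of "?P * ?Q"] z1 d1 by simp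
    moreover have "Iw ?w (pCons 0 (?P * ?Q)) = hn ?w (Suc n')"
      using x_OP_prev[of n'] by simp
    ultimately have hh: "hn ?w (Suc n') = (1/2) * ((\<Sum>k=1..m. ?E k * poly ?P (t k) * poly ?Q (t k)) + of_nat (Suc n') * hn ?w n')"
      by (simp add: algebra_simps)
    have hp: "hn ?w n' > 0" by (rule h_pos)
    show ?thesis unfolding Suc beta_def rnk_def
      using hp by (simp add: hh sum_divide_distrib[symmetric] field_simps)
  qed
  show ?thesis using A B by blast
qed


end
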